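(* Let $u,v>0$ and consider the map $(x,y)\mapsto\big(uy(1-y),\ vx(1-x)\big)$ (Kopel's map with $a=b=1$). Define $R_1=u^2v^2-4u^2v-4uv^2+18uv-27$, $S_3=u^3v^3-4u^3v^2-4u^2v^3+15u^2v^2+12u^2v+12uv^2-85uv+125$, $A_1=uv-15$, $A_2=u^2v^2-4u^2v-5uv^2+21uv+11v-60$. If $R_1>0$, $S_3>0$, $A_1<0$ and $A_2>0$, then two locally stable positive equilibria exist. Furthermore, exactly one locally stable positive equilibrium exists if either ($uv>1$, $R_1<0$, $S_3>0$) or ($uv>1$, $R_1>0$, $S_3<0$).
   Context: An equilibrium is a real fixed point $(x^*,y^* )$; it is positive if $x^*,y^*>0$. An equilibrium is called (locally) stable if both eigenvalues of the Jacobian matrix of the map at it have modulus less than $1$; for a general Kopel map $(x,y)\mapsto((1-a)x+auy(1-y),(1-b)y+bvx(1-x))$ the Jacobian at $(x^*,y^* )$ is $\begin{pmatrix}1-a & ua(1-2y^* )\\ vb(1-2x^* ) & 1-b\end{pmatrix}$, and stability is equivalent to the Jury conditions $1-\mathrm{Tr}(J)+\mathrm{Det}(J)>0$, $1+\mathrm{Tr}(J)+\mathrm{Det}(J)>0$, $1-\mathrm{Det}(J)>0$. *)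

theory Defs
  imports Complex_Main
begin

definition kopel :: "real \<Rightarrow> real \<Rightarrow> real \<Rightarrow> real \<Rightarrow> real \<times> real \<Rightarrow> real \<times> real" where
  "kopel a b u v p = (case p of (x, y) \<Rightarrow>
      ((1 - a) * x + a * u * y * (1 - y), (1 - b) * y + b * v * x * (1 - x)))"

definition kopel_equilibrium :: "real \<Rightarrow> real \<Rightarrow> real \<Rightarrow> real \<Rightarrow> real \<times> real \<Rightarrow> bool" where
  "kopel_equilibrium a b u v p \<longleftrightarrow> kopel a b u v p = p"

definition positive_point :: "real \<times> real \<Rightarrow> bool" where
  "positive_point p \<longleftrightarrow> fst p > 0 \<and> snd p > 0"

definition kopel_jacobian :: "real \<Rightarrow> real \<Rightarrow> real \<Rightarrow> real \<Rightarrow> real \<times> real \<Rightarrow> nat \<Rightarrow> nat \<Rightarrow> real" where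
  "kopel_jacobian a b u v p i j = (case p of (x, y) \<Rightarrow>
     (if i = 0 \<and> j = 0 then 1 - a
      else if i = 0 \<and> j = 1 then u * a * (1 - 2 * y)
      else if i = 1 \<and> j = 0 then v * b * (1 - 2 * x)
      else 1 - b))"

definition eigenvalue2 :: "(nat \<Rightarrow> nat \<Rightarrow> real) \<Rightarrow> complex \<Rightarrow> bool" where
  "eigenvalue2 M l \<longleftrightarrow>
     (l - complex_of_real (M 0 0)) * (l - complex_of_real (M 1 1))
       - complex_of_real (M 0 1) * complex_of_real (M 1 0) = 0"

definition kopel_stable :: "real \<Rightarrow> real \<Rightarrow> real \<Rightarrow> real \<Rightarrow> real \<times> real \<Rightarrow> bool" where
  "kopel_stable a b u v p \<longleftrightarrow>
     (\<forall>l. eigenvalue2 (kopel_jacobian a b u v p) l \<longrightarrow> cmod l < 1)"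

definition stable_pos_eq :: "real \<Rightarrow> real \<Rightarrow> real \<Rightarrow> real \<Rightarrow> real \<times> real \<Rightarrow> bool" where
  "stable_pos_eq a b u v p \<longleftrightarrow>
     kopel_equilibrium a b u v p \<and> positive_point p \<and> kopel_stable a b u v p"

end

theory Submission
  imports Defs
begin

lemma stable_iff_abs:
  "kopel_stable 1 1 u v (x,y) \<longleftrightarrow> \<bar>u*(1-2*y)*(v*(1-2*x))\<bar> < 1"
proof -
  define c where "c = u*(1-2*y)*(v*(1-2*x))"
  have ev: "eigenvalue2 (kopel_jacobian 1 1 u v (x,y)) l \<longleftrightarrow> l*l = complex_of_real c" for l
  proof -
    have "eigenvalue2 (kopel_jacobian 1 1 u v (x,y)) l \<longleftrightarrow>
          l*l - complex_of_real (u*(1-2*y)) * complex_of_real (v*(1-2*x)) = 0"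
      by (simp add: eigenvalue2_def kopel_jacobian_def)
    also have "\<dots> \<longleftrightarrow> l*l = complex_of_real c"
      by (simp add: c_def flip: of_real_mult)
    finally show ?thesis .
  qed
  show ?thesis unfolding c_def[symmetric]
  proof
    assume S: "kopel_stable 1 1 u v (x,y)"
    show "\<bar>c\<bar> < 1"
    proof (cases "c \<ge> 0")
      case True
      let ?l = "complex_of_real (sqrt c)"
      have "?l * ?l = complex_of_real c" using True by (simp flip: of_real_mult)
      then have "cmod ?l < 1" using S ev unfolding kopel_stable_def by blast
      then have "\<bar>sqrt c\<bar> < 1" by simp
      then show ?thesis using True by (simp add: abs_of_nonneg)
    next
      case False
      let ?l = "\<i> * complex_of_real (sqrt (-c))"
      have "?l * ?l = complex_of_real c"
        using False by (simp add: algebra_simps flip: of_real_mult)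
      then have "cmod ?l < 1" using S ev unfolding kopel_stable_def by blast
      then have "\<bar>sqrt (-c)\<bar> < 1" by (simp add: norm_mult)
      then show ?thesis using False by (simp add: abs_of_nonneg)
    qed
  next
    assume A: "\<bar>c\<bar> < 1"
    show "kopel_stable 1 1 u v (x,y)" unfolding kopel_stable_def
    proof (intro allI impI)
      fix l assume "eigenvalue2 (kopel_jacobian 1 1 u v (x,y)) l"
      then have "l*l = complex_of_real c" using ev by blast
      then have "cmod l * cmod l = \<bar>c\<bar>" by (metis norm_mult norm_of_real)
      then have "cmod l * cmod l < 1" using A by simp
      then show "cmod l < 1"
        by (metis abs_norm_cancel abs_square_less_1 power2_eq_square)
    qed
  qed
qed

definition gg :: "real \<Rightarrow> real \<Rightarrow> real \<Rightarrow> real" where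
 "gg u v x = -u*v^2*x^3 + 2*u*v^2*x^2 - u*v*(v+1)*x + (u*v-1)"
definition dg :: "real \<Rightarrow> real \<Rightarrow> real \<Rightarrow> real" where
 "dg u v x = -3*u*v^2*x^2 + 4*u*v^2*x - u*v*(v+1)"
definition hh :: "real \<Rightarrow> real \<Rightarrow> real \<Rightarrow> real" where
 "hh u v x = 2 + x * dg u v x"
definition good :: "real \<Rightarrow> real \<Rightarrow> real \<Rightarrow> bool" where
 "good u v x \<longleftrightarrow> 0 < x \<and> x < 1 \<and> gg u v x = 0 \<and> dg u v x < 0 \<and> hh u v x > 0"

lemma kopel11: "kopel 1 1 u v (x,y) = (u*y*(1-y), v*x*(1-x))"
  by (simp add: kopel_def)

lemma xg_ident: "x * gg u v x = u*(v*x*(1-x))*(1-v*x*(1-x)) - x"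
  unfolding gg_def by algebra

lemma D_ident: "u*(1-2*(v*x*(1-x)))*(v*(1-2*x)) = 1 + gg u v x + x * dg u v x"
  unfolding gg_def dg_def by algebra

lemma stable_pos_iff:
  assumes u: "u > 0" and v: "v > 0"
  shows "stable_pos_eq 1 1 u v P \<longleftrightarrow> (\<exists>x. P = (x, v*x*(1-x)) \<and> good u v x)"
proof -
  obtain x y where P: "P = (x,y)" by (cases P)
  show ?thesis
  proof
    assume S: "stable_pos_eq 1 1 u v P"
    then have eq: "(u*y*(1-y), v*x*(1-x)) = (x,y)" and pp: "positive_point (x,y)"
      and st: "\<bar>u*(1-2*y)*(v*(1-2*x))\<bar> < 1"
      unfolding P stable_pos_eq_def kopel_equilibrium_def kopel11 stable_iff_abs
      by blast+
    from eq have e1: "u*y*(1-y) = x" and e2: "v*x*(1-x) = y" by simp_all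
    from pp have x0: "x > 0" and y0: "y > 0" by (simp_all add: positive_point_def)
    have "v*x > 0" using v x0 by simp
    then have x1: "x < 1" using e2 y0
      by (metis mult.assoc mult_pos_neg not_le zero_less_mult_iff diff_ge_0_iff_ge diff_le_0_iff_le less_eq_real_def)
    have "x * gg u v x = 0" using xg_ident[of x u v] e1 e2 by simp
    then have g0: "gg u v x = 0" using x0 by simp
    have "\<bar>1 + x * dg u v x\<bar> < 1" using st D_ident[of u v x] g0 e2 by simp
    then have a: "x * dg u v x < 0" and b: "x * dg u v x > -2" by auto
    have "dg u v x < 0" using a x0 by (simp add: mult_less_0_iff)
    moreover have "hh u v x > 0" using b by (simp add: hh_def)
    ultimately have "good u v x" using x0 x1 g0 by (simp add: good_def)
    then show "\<exists>x. P = (x, v*x*(1-x)) \<and> good u v x" using P e2 by auto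
  next
    assume "\<exists>x. P = (x, v*x*(1-x)) \<and> good u v x"
    then obtain x where P: "P = (x, v*x*(1-x))" and G: "good u v x" by blast
    from G have x0: "x > 0" and x1: "x < 1" and g0: "gg u v x = 0" and d0: "dg u v x < 0"
      and h0: "hh u v x > 0" by (auto simp: good_def)
    define y where "y = v*x*(1-x)"
    have y0: "y > 0" using x0 x1 v by (simp add: y_def)
    have e1: "u*y*(1-y) = x" using xg_ident[of x u v] g0 by (simp add: y_def)
    have "x * dg u v x < 0" using x0 d0 by (simp add: mult_pos_neg)
    moreover have "x * dg u v x > -2" using h0 by (simp add: hh_def)
    ultimately have "\<bar>1 + x * dg u v x\<bar> < 1" by auto
    then have st: "\<bar>u*(1-2*y)*(v*(1-2*x))\<bar> < 1" using D_ident[of u v x] g0 by (simp add: y_def)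
    show "stable_pos_eq 1 1 u v P"
      unfolding P stable_pos_eq_def kopel_equilibrium_def positive_point_def kopel11 stable_iff_abs
      using e1 x0 y0 st by (simp add: y_def)
  qed
qed

definition qq :: "real \<Rightarrow> real \<Rightarrow> real \<Rightarrow> real \<Rightarrow> real" where
 "qq u v x0 x = -u*v^2*x^2 + u*v^2*(2-x0)*x + (-u*v*(v+1) + 2*u*v^2*x0 - u*v^2*x0^2)"
definition bq :: "real \<Rightarrow> real \<Rightarrow> real \<Rightarrow> real" where
 "bq u v x0 = u*v^2*(2-x0)"
definition cq :: "real \<Rightarrow> real \<Rightarrow> real \<Rightarrow> real" where
 "cq u v x0 = -u*v*(v+1) + 2*u*v^2*x0 - u*v^2*x0^2"
definition alq :: "real \<Rightarrow> real \<Rightarrow> real \<Rightarrow> real" where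
 "alq u v x0 = 2*u*v*(v*x0 - v + 1)"
definition beq :: "real \<Rightarrow> real \<Rightarrow> real \<Rightarrow> real" where
 "beq u v x0 = -3*u*v^2*x0^3 + 8*u*v^2*x0^2 - 7*u*v^2*x0 + 2*u*v^2 - 3*u*v*x0 + 2*u*v + 2"
definition qdisc :: "real \<Rightarrow> real \<Rightarrow> real \<Rightarrow> real" where
 "qdisc u v x0 = (bq u v x0)^2 - 4*(-u*v^2)*(cq u v x0)"
definition NN :: "real \<Rightarrow> real \<Rightarrow> real \<Rightarrow> real" where
 "NN u v x0 = (-u*v^2)*(beq u v x0)^2 - bq u v x0 * alq u v x0 * beq u v x0 + cq u v x0 * (alq u v x0)^2"

lemma qq_eq: "qq u v x0 x = (-u*v^2)*x^2 + bq u v x0 * x + cq u v x0"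
  unfolding qq_def bq_def cq_def by simp

lemma L_div: "gg u v x = (x - x0) * qq u v x0 x + gg u v x0"
  unfolding gg_def qq_def by algebra

lemma L_dq: "dg u v x0 = qq u v x0 x0"
  unfolding dg_def qq_def by algebra

lemma L_disc: "gg u v x0 = 0 \<Longrightarrow>
  u^2*v^4*(u^2*v^2 - 4*u^2*v - 4*u*v^2 + 18*u*v - 27) = qdisc u v x0 * (qq u v x0 x0)^2"
  unfolding gg_def qq_def qdisc_def bq_def cq_def by algebra

lemma L_S3q: "gg u v x0 = 0 \<Longrightarrow>
  (-u*v^2) * (u^3*v^3 - 4*u^3*v^2 - 4*u^2*v^3 + 15*u^2*v^2 + 12*u^2*v + 12*u*v^2 - 85*u*v + 125)
   = hh u v x0 * NN u v x0"
  unfolding gg_def hh_def dg_def NN_def alq_def beq_def bq_def cq_def by algebra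

lemma L_quadform: "4*(-u*v^2)*NN u v x0 = (2*(-u*v^2)*beq u v x0 - bq u v x0 * alq u v x0)^2
   + (4*(-u*v^2)*cq u v x0 - (bq u v x0)^2)*(alq u v x0)^2"
  unfolding NN_def by algebra

lemma L_three:
  assumes "gg u v x0 = 0" "qq u v x0 z = 0"
  shows "u^2*v^2 - 4*u^2*v - 4*u*v^2 + 18*u*v - 27 = u^2*v^4*((x0-z)*(x0-(2-x0-z))*(z-(2-x0-z)))^2"
    and "u^3*v^3 - 4*u^3*v^2 - 4*u^2*v^3 + 15*u^2*v^2 + 12*u^2*v + 12*u*v^2 - 85*u*v + 125
         = hh u v x0 * hh u v z * hh u v (2-x0-z)"
    and "gg u v x = -u*v^2*(x-x0)*(x-z)*(x-(2-x0-z))"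
    and "dg u v x0 = -u*v^2*(x0-z)*(x0-(2-x0-z))"
    and "dg u v z = -u*v^2*(z-x0)*(z-(2-x0-z))"
    and "dg u v (2-x0-z) = -u*v^2*((2-x0-z)-x0)*((2-x0-z)-z)"
  using assms unfolding gg_def qq_def hh_def dg_def by algebra+

lemma L_Epoly: "gg u v x = 0 \<Longrightarrow> (hh u v x)^3 + (u*v-15)*(hh u v x)^2
   - (u^2*v^2-4*u^2*v-4*u*v^2+22*u*v-75) * hh u v x
   - (u^3*v^3 - 4*u^3*v^2 - 4*u^2*v^3 + 15*u^2*v^2 + 12*u^2*v + 12*u*v^2 - 85*u*v + 125) = 0"
  unfolding gg_def hh_def dg_def by algebra

definition qA :: "real \<Rightarrow> real" where "qA t = (-2/5)*t^4 + (17/5)*t^3 + (-244/25)*t^2 + (168/25)*t + 49/5"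
definition qdA :: "real \<Rightarrow> real" where "qdA t = 3*t^4 + (-14)*t^3 + (33/5)*t^2 + (154/5)*t + (-38)"
definition qS :: "real \<Rightarrow> real" where "qS t = (-9/25)*t^4 + (11/5)*t^3 + (-128/25)*t^2 + 3*t + 5"
definition qdS :: "real \<Rightarrow> real" where "qdS t = (13/5)*t^4 + (-6)*t^3 + (16/5)*t^2 + 10*t + (-25)"

lemma dpows:
  fixes d :: real
  assumes "0 \<le> d" "d \<le> 19/1250"
  shows "0 \<le> d^2" "0 \<le> d^3" "0 \<le> d^4" "d^2 \<le> 361/1562500" "d^3 \<le> 6859/1953125000" "d^4 \<le> 130321/2441406250000"
proof -
  show "0 \<le> d^2" "0 \<le> d^3" "0 \<le> d^4" using assms by simp_all
  have "d^2 \<le> (19/1250)^2" "d^3 \<le> (19/1250)^3" "d^4 \<le> (19/1250)^4"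
    using assms by (simp_all only: power_mono)
  then show "d^2 \<le> 361/1562500" "d^3 \<le> 6859/1953125000" "d^4 \<le> 130321/2441406250000"
    by (simp_all add: power_divide)
qed

lemma q_signs:
  assumes "3449/1000 \<le> t" "t \<le> 34642/10000"
  shows "qA t < 0" "qdA t < 0" "qS t < 0" "qdS t > 0"
proof -
  define d where "d = t - 3449/1000"
  have d0: "0 \<le> d" and d1: "d \<le> 19/1250" using assms by (auto simp: d_def)
  note P = dpows[OF d0 d1]
  have tE: "t = 3449/1000 + d" by (simp add: d_def)
  have "qA t = (-577400834701/2500000000000) + (-1535635737/312500000)*d + (-3912053/1250000)*d^2 + (-1324/625)*d^3 + (-2/5)*d^4"
    unfolding qA_def tE by algebra
  then show "qA t < 0" using P d0 by linarith
  have "qdA t = (-3134853832397/1000000000000) + (17261673047/250000000)*d + (37931409/500000)*d^2 + (6847/250)*d^3 + (3)*d^4"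
    unfolding qdA_def tE by algebra
  then show "qdA t < 0" using P d0 d1 by linarith
  have "qS t = (-155973804665809/25000000000000) + (-80543809391/6250000000)*d + (-100638727/12500000)*d^2 + (-17291/6250)*d^3 + (-9/25)*d^4"
    unfolding qS_def tE by algebra
  then show "qS t < 0" using P d0 by linarith
  have "qdS t = (846510981495613/5000000000000) + (305804039537/1250000000)*d + (316723439/2500000)*d^2 + (37337/1250)*d^3 + (13/5)*d^4"
    unfolding qdS_def tE by algebra
  then show "qdS t > 0" using P d0 by linarith
qed

lemma lemX:
  fixes u v :: real
  assumes u: "u > 0" and v: "v > 0"
    and S: "u^3*v^3 - 4*u^3*v^2 - 4*u^2*v^3 + 15*u^2*v^2 + 12*u^2*v + 12*u*v^2 - 85*u*v + 125 > 0"
    and A1: "u*v - 15 < 0"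
    and A2: "u^2*v^2 - 4*u^2*v - 5*u*v^2 + 21*u*v + 11*v - 60 > 0"
  shows "u^2*v^2-4*u^2*v-4*u*v^2+22*u*v-75 < 0"
proof (rule ccontr)
  assume "\<not> ?thesis"
  hence T: "u^2*v^2-4*u^2*v-4*u*v^2+22*u*v-75 \<ge> 0" by simp
  define p where "p = u*v"
  have p0: "p > 0" using u v by (simp add: p_def)
  define t where "t = sqrt p"
  have t0: "t > 0" using p0 by (simp add: t_def)
  have tp: "t^2 = p" using p0 by (simp add: t_def)
  have s: "2*t \<le> u+v"
  proof -
    have "(2*t)^2 = 4*(u*v)" using tp by (simp add: power_mult_distrib p_def)
    moreover have "(u+v)^2 - 4*(u*v) = (u-v)^2" by algebra
    moreover have "(u-v)^2 \<ge> 0" by simp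
    ultimately have "(2*t)^2 \<le> (u+v)^2" by linarith
    then show ?thesis using u v power2_le_imp_le[of "2*t" "u+v"] by linarith
  qed
  have Teq: "u^2*v^2-4*u^2*v-4*u*v^2+22*u*v-75 = p^2 + 22*p - 75 - 4*p*(u+v)"
    unfolding p_def by algebra
  have "4*p*(2*t) \<le> 4*p*(u+v)" using s p0 by simp
  hence T2: "p^2 + 22*p - 75 - 8*p*t \<ge> 0" using T Teq by linarith
  define e where "e = t^2 - 2*t - 5"
  have "p^2 + 22*p - 75 - 8*p*t = e*(t^2 - 6*t + 15)" unfolding e_def tp[symmetric] by algebra
  moreover have "t^2 - 6*t + 15 > 0"
  proof -
    have "t^2-6*t+15 = (t-3)^2 + 6" by algebra
    moreover have "(t-3)^2 \<ge> 0" by simp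
    ultimately show ?thesis by linarith
  qed
  ultimately have e0: "e \<ge> 0" using T2 by (smt (verit) mult_neg_pos)
  have pl15: "p < 15" using A1 by (simp add: p_def)
  have p12: "p < 12"
  proof (rule ccontr)
    assume "\<not> p < 12" hence p12: "p \<ge> 12" by simp
    define fa where "fa = (11-5*p)*v^2 + (p^2+21*p-60)*v - 4*p^2"
    have "fa = v * (u^2*v^2 - 4*u^2*v - 5*u*v^2 + 21*u*v + 11*v - 60)" unfolding fa_def p_def by algebra
    hence fa0: "fa > 0" using v A2 by simp
    have id: "4*(11-5*p)*fa = (2*(11-5*p)*v + (p^2+21*p-60))^2 - (p-12)*(p-15)*(p^2-11*p+20)"
      unfolding fa_def by algebra
    have "(p-12)*(p-15) \<le> 0" using p12 pl15 by (simp add: mult_nonneg_nonpos)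
    moreover have "p^2-11*p+20 > 0"
    proof -
      have "p*(p-11) \<ge> 0" using p12 by simp
      moreover have "p^2-11*p+20 = p*(p-11) + 20" by algebra
      ultimately show ?thesis by linarith
    qed
    ultimately have "(p-12)*(p-15)*(p^2-11*p+20) \<le> 0" by (simp add: mult_nonpos_nonneg)
    moreover have "(2*(11-5*p)*v + (p^2+21*p-60))^2 \<ge> 0" by simp
    moreover have "4*(11-5*p)*fa < 0" using fa0 p12 by (simp add: mult_neg_pos)
    ultimately show False using id by linarith
  qed
  have tlo: "3449/1000 \<le> t"
  proof (rule ccontr)
    assume "\<not> 3449/1000 \<le> t"
    hence "(t-3449/1000)*(t+1449/1000) < 0" using t0 by (simp add: mult_neg_pos)
    moreover have "e = (t-3449/1000)*(t+1449/1000) - 2399/1000000" unfolding e_def by algebra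
    ultimately show False using e0 by linarith
  qed
  have thi: "t \<le> 34642/10000"
  proof (rule ccontr)
    assume "\<not> t \<le> 34642/10000"
    hence "(34642/10000::real)^2 < t^2" by (intro power_strict_mono) auto
    moreover have "(34642/10000::real)^2 = 1200068164/100000000" by (simp add: power2_eq_square)
    ultimately show False using tp p12 by linarith
  qed
  note qs = q_signs[OF tlo thi]
  have "(3449/1000)*(3449/1000) \<le> t*t" using tlo by (intro mult_mono) auto
  hence p11: "p > 11" using tp by (simp add: power2_eq_square)
  hence p3: "p > 3" by simp
  define w where "w = t - e/5"
  define FA where "FA x = (11-5*p)*x^2 + (p^2+21*p-60)*x - 4*p^2" for x
  define DA where "DA x = 2*(11-5*p)*x + (p^2+21*p-60)" for x
  define FS where "FS x = -(4*p^2-12*p)*x^2 + (p^3+15*p^2-85*p+125)*x - (4*p^2-12*p)*p" for x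
  define DS where "DS x = -2*(4*p^2-12*p)*x + (p^3+15*p^2-85*p+125)" for x
  have FAv: "FA v = v * (u^2*v^2 - 4*u^2*v - 5*u*v^2 + 21*u*v + 11*v - 60)"
    unfolding FA_def p_def by algebra
  have FSv: "FS v = v * (u^3*v^3 - 4*u^3*v^2 - 4*u^2*v^3 + 15*u^2*v^2 + 12*u^2*v + 12*u*v^2 - 85*u*v + 125)"
    unfolding FS_def p_def by algebra
  have FAw: "FA w = e * qA t" unfolding FA_def w_def e_def qA_def tp[symmetric] by algebra
  have DAw: "DA w = qdA t" unfolding DA_def w_def e_def qdA_def tp[symmetric] by algebra
  have FSw: "FS w = e^2 * qS t" unfolding FS_def w_def e_def qS_def tp[symmetric] by algebra
  have DSw: "DS w = e * qdS t" unfolding DS_def w_def e_def qdS_def tp[symmetric] by algebra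
  have TA: "FA v = FA w + DA w * (v - w) + (11-5*p)*(v-w)^2" unfolding FA_def DA_def by algebra
  have TS: "FS v = FS w + DS w * (v - w) + (-(4*p^2-12*p))*(v-w)^2" unfolding FS_def DS_def by algebra
  have FA0: "FA v > 0" using FAv v A2 by simp
  have FS0: "FS v > 0" using FSv v S by simp
  have vw: "v < w"
  proof (rule ccontr)
    assume "\<not> v < w" hence "v - w \<ge> 0" by simp
    moreover have "FA w \<le> 0" using FAw e0 qs(1) by (simp add: mult_nonneg_nonpos)
    moreover have "DA w * (v - w) \<le> 0" using DAw qs(2) \<open>v - w \<ge> 0\<close> by (simp add: mult_nonpos_nonneg)
    moreover have "(11-5*p)*(v-w)^2 \<le> 0" using p11 by (intro mult_nonpos_nonneg) auto
    ultimately show False using TA FA0 by linarith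
  qed
  have "FS w \<le> 0" using FSw qs(3) by (simp add: mult_nonneg_nonpos)
  moreover have "DS w * (v - w) \<le> 0" using DSw qs(4) e0 vw by (simp add: mult_nonneg_nonpos)
  moreover have "(-(4*p^2-12*p))*(v-w)^2 \<le> 0"
  proof -
    have "4*p^2-12*p = 4*p*(p-3)" by algebra
    also have "\<dots> > 0" using p3 by simp
    finally show ?thesis by (simp add: mult_nonpos_nonneg)
  qed
  ultimately show False using TS FS0 by linarith
qed

lemma gg_alt: "gg u v x = u*v*((1-x)*(1 + v*(x*(x-1)))) - 1"
  unfolding gg_def by algebra

lemma roots_in01:
  assumes u: "u > 0" and v: "v > 0" and p: "u*v > 1" and g: "gg u v x = 0"
  shows "0 < x \<and> x < 1"
proof (rule ccontr)
  assume "\<not> (0 < x \<and> x < 1)"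
  hence "x \<le> 0 \<or> x \<ge> 1" by auto
  then show False
  proof
    assume x: "x \<le> 0"
    have "x*(x-1) \<ge> 0" using x by (simp add: mult_nonpos_nonpos)
    hence b1: "1 + v*(x*(x-1)) \<ge> 1" using v by simp
    have a1: "1 - x \<ge> 1" using x by simp
    have "1*1 \<le> (1-x)*(1 + v*(x*(x-1)))" using a1 b1 by (intro mult_mono) auto
    hence "u*v*1 \<le> u*v*((1-x)*(1 + v*(x*(x-1))))" using u v by (intro mult_left_mono) auto
    thus False using g gg_alt[of u v x] p by simp
  next
    assume x: "x \<ge> 1"
    have "x*(x-1) \<ge> 0" using x by simp
    hence b1: "1 + v*(x*(x-1)) > 0" using v by (smt (verit) mult_nonneg_nonneg)
    have "(1-x)*(1 + v*(x*(x-1))) \<le> 0" using x b1 by (simp add: mult_nonpos_nonneg)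
    hence "u*v*((1-x)*(1 + v*(x*(x-1)))) \<le> 0" using u v by (simp add: mult_nonneg_nonpos)
    thus False using g gg_alt[of u v x] by simp
  qed
qed

lemma exists_root:
  assumes u: "u > 0" and v: "v > 0" and p: "u*v > 1"
  shows "\<exists>x. gg u v x = 0"
proof -
  have c: "continuous_on {0..1} (gg u v)" unfolding gg_def by (intro continuous_intros)
  have "gg u v 1 \<le> 0" "0 \<le> gg u v 0" using p by (simp_all add: gg_def algebra_simps power2_eq_square)
  from IVT2'[of "gg u v" 1 0 0, OF this _ c] show ?thesis by auto
qed

lemma quad_neg:
  fixes a b c x :: real
  assumes "a < 0" "b^2 - 4*a*c < 0"
  shows "a*x^2 + b*x + c < 0"
proof -
  have "4*a*(a*x^2 + b*x + c) = (2*a*x+b)^2 - (b^2 - 4*a*c)" by algebra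
  moreover have "(2*a*x+b)^2 \<ge> 0" by simp
  ultimately have "4*a*(a*x^2 + b*x + c) > 0" using assms by linarith
  thus ?thesis using assms(1) by (simp add: zero_less_mult_iff)
qed

lemma quad_root_disc:
  fixes a b c x :: real
  assumes "a*x^2 + b*x + c = 0"
  shows "b^2 - 4*a*c \<ge> 0"
proof -
  have "(2*a*x+b)^2 = b^2 - 4*a*c + 4*a*(a*x^2 + b*x + c)" by algebra
  thus ?thesis using assms by (metis add.right_neutral mult_zero_right zero_le_power2)
qed

lemma quad_two_roots:
  fixes a b c :: real
  assumes a: "a \<noteq> 0" and D: "b^2 - 4*a*c > 0"
  shows "\<exists>z1 z2. z1 \<noteq> z2 \<and> a*z1^2 + b*z1 + c = 0 \<and> a*z2^2 + b*z2 + c = 0"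
proof -
  define s where "s = sqrt (b^2 - 4*a*c)"
  have s2: "s^2 = b^2 - 4*a*c" using D by (simp add: s_def)
  have s0: "s > 0" using D by (simp add: s_def)
  define z1 where "z1 = (-b + s)/(2*a)"
  define z2 where "z2 = (-b - s)/(2*a)"
  have "z1 \<noteq> z2" using s0 a by (simp add: z1_def z2_def divide_cancel_right)
  moreover have "a*z1^2 + b*z1 + c = 0"
  proof -
    have "4*a*(a*z1^2 + b*z1 + c) = (2*a*z1+b)^2 - (b^2-4*a*c)" by algebra
    also have "2*a*z1 + b = s" using a by (simp add: z1_def)
    finally have "4*a*(a*z1^2 + b*z1 + c) = 0" using s2 by simp
    thus ?thesis using a by simp
  qed
  moreover have "a*z2^2 + b*z2 + c = 0"
  proof -
    have "4*a*(a*z2^2 + b*z2 + c) = (2*a*z2+b)^2 - (b^2-4*a*c)" by algebra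
    also have "2*a*z2 + b = -s" using a by (simp add: z2_def)
    finally have "4*a*(a*z2^2 + b*z2 + c) = 0" using s2 by simp
    thus ?thesis using a by simp
  qed
  ultimately show ?thesis by blast
qed

lemma sort3:
  fixes x y z :: real
  assumes "P x" "P y" "P z" "x \<noteq> y" "x \<noteq> z" "y \<noteq> z"
  shows "\<exists>a b c. a < b \<and> b < c \<and> P a \<and> P b \<and> P c"
proof -
  have "(x<y \<and> y<z) \<or> (x<z \<and> z<y) \<or> (y<x \<and> x<z) \<or> (y<z \<and> z<x) \<or> (z<x \<and> x<y) \<or> (z<y \<and> y<x)"
    using assms(4-6) by linarith
  then show ?thesis using assms(1-3) by blast
qed

lemma three_roots:
  assumes u: "u > 0" and v: "v > 0" and p: "u*v > 1"
    and ab: "a < b" and bc: "b < c"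
    and ga: "gg u v a = 0" and gb: "gg u v b = 0" and gc: "gg u v c = 0"
  shows "\<forall>x. gg u v x = 0 \<longrightarrow> x = a \<or> x = b \<or> x = c"
    and "u^3*v^3 - 4*u^3*v^2 - 4*u^2*v^3 + 15*u^2*v^2 + 12*u^2*v + 12*u*v^2 - 85*u*v + 125
         = hh u v a * hh u v b * hh u v c"
    and "dg u v a < 0" "dg u v b > 0" "dg u v c < 0"
proof -
  have k: "u*v^2 > 0" using u v by simp
  have "gg u v b = (b - a) * qq u v a b + gg u v a" by (rule L_div)
  hence qab: "qq u v a b = 0" using ga gb ab by simp
  note L = L_three[OF ga qab]
  have "gg u v c = -u*v^2*(c-a)*(c-b)*(c-(2-a-b))" by (rule L(3))
  hence "-u*v^2*(c-a)*(c-b)*(c-(2-a-b)) = 0" using gc by simp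
  moreover have "-u*v^2 \<noteq> 0" "c - a \<noteq> 0" "c - b \<noteq> 0" using u v ab bc by auto
  ultimately have cw: "c = 2-a-b" by simp
  show "\<forall>x. gg u v x = 0 \<longrightarrow> x = a \<or> x = b \<or> x = c"
  proof (intro allI impI)
    fix x assume "gg u v x = 0"
    hence "-u*v^2*(x-a)*(x-b)*(x-(2-a-b)) = 0" using L(3)[of x] by simp
    moreover have "-u*v^2 \<noteq> 0" using u v by simp
    ultimately show "x = a \<or> x = b \<or> x = c" using cw by simp
  qed
  show "u^3*v^3 - 4*u^3*v^2 - 4*u^2*v^3 + 15*u^2*v^2 + 12*u^2*v + 12*u*v^2 - 85*u*v + 125
         = hh u v a * hh u v b * hh u v c" using L(2) cw by simp
  have "(a-b)*(a-c) > 0" using ab bc by (simp add: mult_neg_neg)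
  hence "u*v^2*((a-b)*(a-c)) > 0" using k by simp
  moreover have "dg u v a = -(u*v^2*((a-b)*(a-c)))" using L(4) cw by algebra
  ultimately show "dg u v a < 0" by linarith
  have "(b-a)*(c-b) > 0" using ab bc by (simp add: mult_pos_pos)
  hence "u*v^2*((b-a)*(c-b)) > 0" using k by simp
  moreover have "dg u v b = u*v^2*((b-a)*(c-b))" using L(5) cw by algebra
  ultimately show "dg u v b > 0" by linarith
  have "(c-a)*(c-b) > 0" using ab bc by (simp add: mult_pos_pos)
  hence "u*v^2*((c-a)*(c-b)) > 0" using k by simp
  moreover have "dg u v c = -(u*v^2*((c-a)*(c-b)))"
  proof -
    have "dg u v c = -u*v^2*(c-a)*(c-b)" using L(6) cw by simp
    also have "\<dots> = -(u*v^2*((c-a)*(c-b)))" by algebra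
    finally show ?thesis .
  qed
  ultimately show "dg u v c < 0" by linarith
qed

lemma transfer_unique:
  assumes u: "u > 0" and v: "v > 0" and ex: "\<exists>!x. good u v x"
  shows "\<exists>!P. stable_pos_eq 1 1 u v P"
proof -
  obtain x where gx: "good u v x" and un: "\<And>y. good u v y \<Longrightarrow> y = x" using ex by blast
  show ?thesis
  proof (rule ex1I[of _ "(x, v*x*(1-x))"])
    show "stable_pos_eq 1 1 u v (x, v*x*(1-x))" using stable_pos_iff[OF u v] gx by blast
  next
    fix P assume "stable_pos_eq 1 1 u v P"
    then obtain y where "P = (y, v*y*(1-y))" "good u v y" using stable_pos_iff[OF u v] by blast
    then show "P = (x, v*x*(1-x))" using un by blast
  qed
qed

lemma transfer_two:
  assumes u: "u > 0" and v: "v > 0" and g1: "good u v x1" and g2: "good u v x2" and ne: "x1 \<noteq> x2"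
  shows "\<exists>p q. p \<noteq> q \<and> stable_pos_eq 1 1 u v p \<and> stable_pos_eq 1 1 u v q"
proof -
  have "stable_pos_eq 1 1 u v (x1, v*x1*(1-x1))" using stable_pos_iff[OF u v] g1 by blast
  moreover have "stable_pos_eq 1 1 u v (x2, v*x2*(1-x2))" using stable_pos_iff[OF u v] g2 by blast
  moreover have "(x1, v*x1*(1-x1)) \<noteq> (x2, v*x2*(1-x2))" using ne by simp
  ultimately show ?thesis by blast
qed

lemma three_exist:
  assumes u: "u > 0" and v: "v > 0" and p: "u*v > 1"
    and R: "u^2*v^2 - 4*u^2*v - 4*u*v^2 + 18*u*v - 27 > 0"
  shows "\<exists>a b c. a < b \<and> b < c \<and> gg u v a = 0 \<and> gg u v b = 0 \<and> gg u v c = 0"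
proof -
  obtain x0 where g0: "gg u v x0 = 0" using exists_root[OF u v p] by blast
  have D: "u^2*v^4*(u^2*v^2 - 4*u^2*v - 4*u*v^2 + 18*u*v - 27) = qdisc u v x0 * (qq u v x0 x0)^2"
    by (rule L_disc[OF g0])
  have "u^2*v^4 > 0" using u v by simp
  hence pos: "qdisc u v x0 * (qq u v x0 x0)^2 > 0" using D R by (metis mult_pos_pos)
  have qd: "qdisc u v x0 > 0"
  proof (rule ccontr)
    assume "\<not> qdisc u v x0 > 0"
    hence "qdisc u v x0 * (qq u v x0 x0)^2 \<le> 0" by (simp add: mult_nonpos_nonneg)
    thus False using pos by simp
  qed
  have q0: "qq u v x0 x0 \<noteq> 0" using pos by auto
  have "-u*v^2 \<noteq> 0" using u v by simp
  moreover have "(bq u v x0)^2 - 4*(-u*v^2)*(cq u v x0) > 0" using qd by (simp add: qdisc_def)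
  ultimately obtain z1 z2 where z: "z1 \<noteq> z2" "(-u*v^2)*z1^2 + bq u v x0*z1 + cq u v x0 = 0"
      "(-u*v^2)*z2^2 + bq u v x0*z2 + cq u v x0 = 0"
    using quad_two_roots by blast
  have qz1: "qq u v x0 z1 = 0" and qz2: "qq u v x0 z2 = 0" using z by (simp_all add: qq_eq)
  have gz1: "gg u v z1 = 0" using L_div[of u v z1 x0] qz1 g0 by simp
  have gz2: "gg u v z2 = 0" using L_div[of u v z2 x0] qz2 g0 by simp
  have "z1 \<noteq> x0" using qz1 q0 by auto
  moreover have "z2 \<noteq> x0" using qz2 q0 by auto
  ultimately show ?thesis using sort3[of "\<lambda>x. gg u v x = 0" x0 z1 z2] g0 gz1 gz2 z(1) by metis
qed

lemma hpos:
  assumes g: "gg u v x = 0" and A1: "u*v - 15 < 0"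
    and T: "u^2*v^2-4*u^2*v-4*u*v^2+22*u*v-75 < 0"
    and S: "u^3*v^3 - 4*u^3*v^2 - 4*u^2*v^3 + 15*u^2*v^2 + 12*u^2*v + 12*u*v^2 - 85*u*v + 125 > 0"
  shows "hh u v x > 0"
proof (rule ccontr)
  assume "\<not> hh u v x > 0"
  hence h: "hh u v x \<le> 0" by simp
  define h where "h = hh u v x"
  have E: "h^3 + (u*v-15)*h^2 - (u^2*v^2-4*u^2*v-4*u*v^2+22*u*v-75) * h
   - (u^3*v^3 - 4*u^3*v^2 - 4*u^2*v^3 + 15*u^2*v^2 + 12*u^2*v + 12*u*v^2 - 85*u*v + 125) = 0"
    using L_Epoly[OF g] by (simp add: h_def)
  have h0: "h \<le> 0" using h by (simp add: h_def)
  have "h^3 = h * h^2" by algebra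
  moreover have "h * h^2 \<le> 0" using h0 by (simp add: mult_nonpos_nonneg)
  moreover have "(u*v-15)*h^2 \<le> 0" using A1 by (simp add: mult_nonpos_nonneg)
  moreover have "(u^2*v^2-4*u^2*v-4*u*v^2+22*u*v-75) * h \<ge> 0" using T h0 by (simp add: mult_nonpos_nonpos)
  ultimately show False using E S by linarith
qed

theorem theorem2:
  fixes u v :: real
  assumes "u > 0" and "v > 0"
  defines "R1 \<equiv> u^2*v^2 - 4*u^2*v - 4*u*v^2 + 18*u*v - 27"
      and "S3 \<equiv> u^3*v^3 - 4*u^3*v^2 - 4*u^2*v^3 + 15*u^2*v^2 + 12*u^2*v + 12*u*v^2 - 85*u*v + 125"
      and "A1 \<equiv> u*v - 15"
      and "A2 \<equiv> u^2*v^2 - 4*u^2*v - 5*u*v^2 + 21*u*v + 11*v - 60"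
  shows "(R1 > 0 \<and> S3 > 0 \<and> A1 < 0 \<and> A2 > 0 \<longrightarrow>
            (\<exists>p q. p \<noteq> q \<and> stable_pos_eq 1 1 u v p \<and> stable_pos_eq 1 1 u v q))
       \<and> ((u*v > 1 \<and> R1 < 0 \<and> S3 > 0) \<or> (u*v > 1 \<and> R1 > 0 \<and> S3 < 0) \<longrightarrow>
            (\<exists>!p. stable_pos_eq 1 1 u v p))"
proof (intro conjI impI)
  note u = \<open>u > 0\<close> and v = \<open>v > 0\<close>
  have kk: "u*v^2 > 0" using u v by simp
  have S3_eq: "S3 = hh u v a * hh u v b * hh u v c"
    if "a < b" "b < c" "gg u v a = 0" "gg u v b = 0" "gg u v c = 0" "u*v > 1" for a b c
    using three_roots(2)[OF u v that(6) that(1-5)] by (simp add: S3_def)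
  {
    assume H: "R1 > 0 \<and> S3 > 0 \<and> A1 < 0 \<and> A2 > 0"
    have p1: "u*v > 1"
    proof (rule ccontr)
      assume "\<not> u*v > 1"
      hence pl: "u*v \<le> 1" by simp
      have p0: "u*v > 0" using u v by simp
      have "(u*v)*(u*v) \<le> 1*1" using pl p0 by (intro mult_mono) auto
      moreover have "R1 = (u*v)*(u*v) + 18*(u*v) - 27 - 4*(u*v)*(u+v)" unfolding R1_def by algebra
      moreover have "4*(u*v)*(u+v) > 0" using u v by simp
      ultimately have "R1 < 0" using pl by linarith
      thus False using H by simp
    qed
    have T: "u^2*v^2-4*u^2*v-4*u*v^2+22*u*v-75 < 0"
      using lemX[OF u v] H unfolding S3_def A1_def A2_def by blast
    obtain a b c where abc: "a < b" "b < c" "gg u v a = 0" "gg u v b = 0" "gg u v c = 0"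
      using three_exist[OF u v p1] H unfolding R1_def by blast
    note TR = three_roots[OF u v p1 abc]
    have A1': "u*v - 15 < 0" using H by (simp add: A1_def)
    have S3': "u^3*v^3 - 4*u^3*v^2 - 4*u^2*v^3 + 15*u^2*v^2 + 12*u^2*v + 12*u*v^2 - 85*u*v + 125 > 0"
      using H by (simp add: S3_def)
    have "good u v a" unfolding good_def
      using roots_in01[OF u v p1 abc(3)] abc(3) TR(3) hpos[OF abc(3) A1' T S3'] by simp
    moreover have "good u v c" unfolding good_def
      using roots_in01[OF u v p1 abc(5)] abc(5) TR(5) hpos[OF abc(5) A1' T S3'] by simp
    moreover have "a \<noteq> c" using abc by simp
    ultimately show "\<exists>p q. p \<noteq> q \<and> stable_pos_eq 1 1 u v p \<and> stable_pos_eq 1 1 u v q"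
      using transfer_two[OF u v] by blast
  }
  {
    assume H: "(u*v > 1 \<and> R1 < 0 \<and> S3 > 0) \<or> (u*v > 1 \<and> R1 > 0 \<and> S3 < 0)"
    have p1: "u*v > 1" using H by blast
    have "\<exists>!x. good u v x"
      using H
    proof (elim disjE conjE)
      assume R: "R1 < 0" and S: "S3 > 0"
      obtain x0 where g0: "gg u v x0 = 0" using exists_root[OF u v p1] by blast
      have D: "u^2*v^4*R1 = qdisc u v x0 * (qq u v x0 x0)^2"
        unfolding R1_def by (rule L_disc[OF g0])
      have "u^2*v^4 > 0" using u v by simp
      hence "u^2*v^4*R1 < 0" using R by (intro mult_pos_neg)
      hence neg: "qdisc u v x0 * (qq u v x0 x0)^2 < 0" using D by simp
      have qd: "qdisc u v x0 < 0"
      proof (rule ccontr)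
        assume "\<not> qdisc u v x0 < 0"
        hence "qdisc u v x0 * (qq u v x0 x0)^2 \<ge> 0" by simp
        thus False using neg by simp
      qed
      have an: "-u*v^2 < 0" using kk by simp
      have qneg: "qq u v x0 x < 0" for x
        using quad_neg[OF an, of "bq u v x0" "cq u v x0" x] qd by (simp add: qq_eq qdisc_def)
      have d0: "dg u v x0 < 0" using qneg[of x0] L_dq[of u v x0] by simp
      have N0: "NN u v x0 \<le> 0"
      proof -
        have e: "(4*(-u*v^2)*cq u v x0 - (bq u v x0)^2)*(alq u v x0)^2 = (- qdisc u v x0)*(alq u v x0)^2"
          by (simp add: qdisc_def)
        have "(- qdisc u v x0)*(alq u v x0)^2 \<ge> 0" using qd by (intro mult_nonneg_nonneg) auto
        hence "(4*(-u*v^2)*cq u v x0 - (bq u v x0)^2)*(alq u v x0)^2 \<ge> 0" using e by simp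
        moreover have "(2*(-u*v^2)*beq u v x0 - bq u v x0 * alq u v x0)^2 \<ge> 0" by simp
        ultimately have "4*(-u*v^2)*NN u v x0 \<ge> 0" using L_quadform[of u v x0] by linarith
        show ?thesis
        proof (rule ccontr)
          assume "\<not> NN u v x0 \<le> 0"
          hence "NN u v x0 > 0" by simp
          moreover have "4*(-u*v^2) < 0" using kk by simp
          ultimately have "4*(-u*v^2)*NN u v x0 < 0" using mult_neg_pos by blast
          thus False using \<open>4*(-u*v^2)*NN u v x0 \<ge> 0\<close> by linarith
        qed
      qed
      have "(-u*v^2) * S3 = hh u v x0 * NN u v x0" unfolding S3_def by (rule L_S3q[OF g0])
      moreover have "(-u*v^2) * S3 < 0" using an S by (simp add: mult_neg_pos)
      ultimately have "hh u v x0 * NN u v x0 < 0" by simp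
      hence h0: "hh u v x0 > 0"
      proof -
        assume L: "hh u v x0 * NN u v x0 < 0"
        show ?thesis
        proof (rule ccontr)
          assume "\<not> hh u v x0 > 0"
          hence "hh u v x0 * NN u v x0 \<ge> 0" using N0 by (intro mult_nonpos_nonpos) auto
          thus False using L by linarith
        qed
      qed
      have gx0: "good u v x0" unfolding good_def using roots_in01[OF u v p1 g0] g0 d0 h0 by simp
      show "\<exists>!x. good u v x"
      proof (rule ex1I[of _ x0])
        show "good u v x0" by (rule gx0)
      next
        fix y assume "good u v y"
        hence gy: "gg u v y = 0" by (simp add: good_def)
        show "y = x0"
        proof (rule ccontr)
          assume "y \<noteq> x0"
          moreover have "gg u v y = (y - x0) * qq u v x0 y + gg u v x0" by (rule L_div)
          ultimately have "qq u v x0 y = 0" using gy g0 by simp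
          thus False using qneg[of y] by simp
        qed
      qed
    next
      assume R: "R1 > 0" and S: "S3 < 0"
      obtain a b c where abc: "a < b" "b < c" "gg u v a = 0" "gg u v b = 0" "gg u v c = 0"
        using three_exist[OF u v p1] R unfolding R1_def by blast
      note TR = three_roots[OF u v p1 abc]
      have SS: "S3 = hh u v a * hh u v b * hh u v c" using S3_eq[OF abc p1] .
      have b01: "0 < b" using roots_in01[OF u v p1 abc(4)] by simp
      have "b * dg u v b > 0" using b01 TR(4) by simp
      hence hb: "hh u v b > 0" by (simp add: hh_def)
      have "hh u v a * hh u v c < 0"
      proof (rule ccontr)
        assume "\<not> hh u v a * hh u v c < 0"
        hence "hh u v a * hh u v c * hh u v b \<ge> 0" using hb by simp
        hence "S3 \<ge> 0" using SS by (simp add: mult_ac)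
        thus False using S by simp
      qed
      hence cases: "(hh u v a > 0 \<and> hh u v c < 0) \<or> (hh u v a < 0 \<and> hh u v c > 0)"
        by (simp add: mult_less_0_iff)
      have nb: "\<not> good u v b" using TR(4) by (simp add: good_def)
      have roots: "good u v y \<Longrightarrow> y = a \<or> y = b \<or> y = c" for y
        using TR(1) by (simp add: good_def)
      from cases show "\<exists>!x. good u v x"
      proof
        assume hc: "hh u v a > 0 \<and> hh u v c < 0"
        have ga: "good u v a" unfolding good_def
          using roots_in01[OF u v p1 abc(3)] abc(3) TR(3) hc by simp
        have "\<not> good u v c" using hc by (simp add: good_def)
        then show ?thesis using ga nb roots by blast
      next
        assume hc: "hh u v a < 0 \<and> hh u v c > 0"
        have gc: "good u v c" unfolding good_def
          using roots_in01[OF u v p1 abc(5)] abc(5) TR(5) hc by simp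
        have "\<not> good u v a" using hc by (simp add: good_def)
        then show ?thesis using gc nb roots by blast
      qed
    qed
    then show "\<exists>!p. stable_pos_eq 1 1 u v p" by (rule transfer_unique[OF u v])
  }
qed

end
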